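(* Let $X\in\mathbb{R}^{n\times p}$ have unit $\ell_2$-norm columns and worst-case coherence $\mu>0$, let $\beta\in\mathbb{R}^p$ be $k$-sparse with support $\mathcal{S}$, let $\eta\in\mathbb{R}^n$ have independent $\mathcal{N}(0,\sigma^2)$ entries, and $y=X\beta+\eta$. Suppose $p\ge2n$, $k<\mu^{-1}$, and $$\frac{\beta_{\min}}{\|\beta\|_2}>2c_1\mu\sqrt{k}+4c_2\frac{\sqrt{\sigma^2\log p}}{\|\beta\|_2}$$ for some constants $c_1,c_2>2$. Then, with probability exceeding $1-2\big(p\sqrt{2\pi\log p}\big)^{-1}$, the output $\hat{\mathcal{S}}$ of Algorithm 1 satisfies $\mathcal{S}\subset\hat{\mathcal{S}}$ for every integer $d$ with $\lceil\sqrt{n}\rceil\le d\le p$.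
   Context: Worst-case coherence of $X$ with unit-norm columns $X_1,\dots,X_p$: $\mu=\max_{i\ne j}|X_i^\top X_j|$. $[[p]]=\{1,\dots,p\}$, $k<n$, $\sigma>0$. $\beta$ (deterministic) is $k$-sparse with support $\mathcal{S}=\{i:\beta_i\ne0\}$, $|\mathcal{S}|=k$; $\beta_{\min}=\min_{i\in\mathcal{S}}|\beta_i|$. Algorithm 1: given $X$, $y$ and an integer $d\in\{1,\dots,p\}$, compute $w=X^\top y$ and output $\hat{\mathcal{S}}\subset[[p]]$ with $|\hat{\mathcal{S}}|=d$ such that $|w_i|\ge|w_j|$ for all $i\in\hat{\mathcal{S}}$, $j\notin\hat{\mathcal{S}}$ (ties broken arbitrarily). *)

theory Defs
  imports "HOL-Probability.Probability"
begin

definition coherence :: "real ^ 'p ^ 'n \<Rightarrow> real" where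
  "coherence X = Max {\<bar>column i X \<bullet> column j X\<bar> | i j. i \<noteq> j}"

definition supp_vec :: "real ^ 'p \<Rightarrow> 'p set" where
  "supp_vec \<beta> = {i. \<beta> $ i \<noteq> 0}"

definition beta_min :: "real ^ 'p \<Rightarrow> real" where
  "beta_min \<beta> = Min {\<bar>\<beta> $ i\<bar> | i. i \<in> supp_vec \<beta>}"

text \<open>Algorithm 1: S is a legitimate output of the algorithm on input (X, y, d):
  w = X^T y, and S consists of d indices of largest |w_i| (ties broken arbitrarily).\<close>
definition alg1_output :: "real ^ 'p ^ 'n \<Rightarrow> real ^ 'n \<Rightarrow> nat \<Rightarrow> 'p set \<Rightarrow> bool" where
  "alg1_output X y d S \<longleftrightarrow>
     (let w = transpose X *v y in
       card S = d \<and> (\<forall>i\<in>S. \<forall>j. j \<notin> S \<longrightarrow> \<bar>w $ i\<bar> \<ge> \<bar>w $ j\<bar>))"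

end

theory Submission imports Defs "HOL-Real_Asymp.Real_Asymp" begin



lemma nd_tendsto:
  assumes "\<sigma> > 0" "t > 0"
  shows "((\<lambda>x. - (\<sigma>\<^sup>2 * normal_density 0 \<sigma> x / t)) \<longlongrightarrow> 0) at_top"
proof -
  have "((\<lambda>x. exp (-(x - 0)\<^sup>2/ (2 * \<sigma>\<^sup>2))) \<longlongrightarrow> 0) at_top"
    using assms by real_asymp
  then have "((\<lambda>x. - (\<sigma>\<^sup>2 * (1 / sqrt (2 * pi * \<sigma>\<^sup>2) * exp (-(x - 0)\<^sup>2/ (2 * \<sigma>\<^sup>2))) / t)) \<longlongrightarrow> - (\<sigma>\<^sup>2 * (1 / sqrt (2 * pi * \<sigma>\<^sup>2) * 0) / t)) at_top"
    using assms by (intro tendsto_intros) auto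
  then show ?thesis by (simp add: normal_density_def)
qed

lemma nd_deriv:
  assumes "\<sigma> > 0" "t > 0"
  shows "DERIV (\<lambda>x. - (\<sigma>\<^sup>2 * normal_density 0 \<sigma> x / t)) x :> x / t * normal_density 0 \<sigma> x"
  unfolding normal_density_def
  using assms
  by (auto intro!: derivative_eq_intros simp: field_simps power2_eq_square)

lemma gauss_upper_tail:
  assumes "\<sigma> > 0" "t > 0"
  shows "(\<integral>\<^sup>+x. ennreal (normal_density 0 \<sigma> x) * indicator {t<..} x \<partial>lborel)
          \<le> ennreal (\<sigma>\<^sup>2 * normal_density 0 \<sigma> t / t)"
proof -
  have "(\<integral>\<^sup>+x. ennreal (normal_density 0 \<sigma> x) * indicator {t<..} x \<partial>lborel)
     \<le> (\<integral>\<^sup>+x. ennreal (x / t * normal_density 0 \<sigma> x) * indicator {t..} x \<partial>lborel)"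
  proof (intro nn_integral_mono)
    fix x :: real
    show "ennreal (normal_density 0 \<sigma> x) * indicator {t<..} x
        \<le> ennreal (x / t * normal_density 0 \<sigma> x) * indicator {t..} x"
    proof (cases "t < x")
      case True
      have "normal_density 0 \<sigma> x \<le> x / t * normal_density 0 \<sigma> x"
      proof -
        have "1 \<le> x / t" using True assms by simp
        then have "1 * normal_density 0 \<sigma> x \<le> x / t * normal_density 0 \<sigma> x"
          by (intro mult_right_mono) auto
        then show ?thesis by simp
      qed
      then show ?thesis using True by (auto intro!: ennreal_leI)
    qed (auto split: split_indicator)
  qed
  also have "\<dots> = ennreal (0 - (- (\<sigma>\<^sup>2 * normal_density 0 \<sigma> t / t)))"
    by (rule nn_integral_FTC_atLeast[where F="\<lambda>x. - (\<sigma>\<^sup>2 * normal_density 0 \<sigma> x / t)"])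
      (use assms nd_deriv nd_tendsto in auto)
  finally show ?thesis by simp
qed



lemma (in prob_space) prob_abs_gt:
  assumes Y: "distributed M lborel Y (normal_density 0 s)" and s: "s > 0" and t: "t > 0"
  shows "measure M {\<omega> \<in> space M. \<bar>Y \<omega>\<bar> > t} \<le> 2 * (s\<^sup>2 * normal_density 0 s t / t)"
proof -
  have Ym: "Y \<in> borel_measurable M" using distributed_measurable[OF Y] by simp
  have Y': "distributed M lborel (\<lambda>x. 0 + (-1) * Y x) (normal_density (0 + (-1) * 0) (\<bar>-1\<bar> * s))"
    by (rule normal_density_affine[OF Y s]) simp
  then have Y'': "distributed M lborel (\<lambda>x. - Y x) (normal_density 0 s)" by simp
  let ?c = "s\<^sup>2 * normal_density 0 s t / t"
  have c0: "?c \<ge> 0" using s t by simp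
  have bnd: "measure M (Z -` {t<..} \<inter> space M) \<le> ?c"
    if Z: "distributed M lborel Z (normal_density 0 s)" for Z
  proof -
    have "emeasure M (Z -` {t<..} \<inter> space M) = (\<integral>\<^sup>+x. ennreal (normal_density 0 s x) * indicator {t<..} x \<partial>lborel)"
      by (rule distributed_emeasure[OF Z]) simp
    also have "\<dots> \<le> ennreal ?c" by (rule gauss_upper_tail[OF s t])
    finally show ?thesis using c0 by (simp add: emeasure_eq_measure ennreal_le_iff)
  qed
  have eq: "{\<omega> \<in> space M. \<bar>Y \<omega>\<bar> > t} = (Y -` {t<..} \<inter> space M) \<union> ((\<lambda>x. - Y x) -` {t<..} \<inter> space M)"
  proof -
    have "\<And>y::real. t < \<bar>y\<bar> \<longleftrightarrow> t < y \<or> t < - y" by linarith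
    then show ?thesis by blast
  qed
  have "measure M {\<omega> \<in> space M. \<bar>Y \<omega>\<bar> > t} \<le> measure M (Y -` {t<..} \<inter> space M) + measure M ((\<lambda>x. - Y x) -` {t<..} \<inter> space M)"
  proof -
    have m1: "Y -` {t<..} \<inter> space M \<in> sets M" using Ym by (rule measurable_sets) simp
    have Ym': "(\<lambda>x. - Y x) \<in> borel_measurable M" using Ym by (rule borel_measurable_uminus)
    have m2: "(\<lambda>x. - Y x) -` {t<..} \<inter> space M \<in> sets M" using Ym' by (rule measurable_sets) simp
    show ?thesis unfolding eq by (rule measure_Un_le[OF m1 m2])
  qed
  also have "\<dots> \<le> ?c + ?c" using bnd[OF Y] bnd[OF Y''] by (rule add_mono)
  finally show ?thesis by linarith
qed

lemma (in prob_space) proj_normal: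
  fixes \<eta> :: "'a \<Rightarrow> real ^ 'n" and a :: "real ^ 'n"
  assumes ind: "indep_vars (\<lambda>_. borel) (\<lambda>r \<omega>. \<eta> \<omega> $ r) UNIV"
    and g: "\<forall>r. distributed M lborel (\<lambda>\<omega>. \<eta> \<omega> $ r) (normal_density 0 \<sigma>)"
    and s: "\<sigma> > 0" and a: "norm a = 1"
  shows "distributed M lborel (\<lambda>\<omega>. a \<bullet> \<eta> \<omega>) (normal_density 0 \<sigma>)"
proof -
  define I where "I = {r. a $ r \<noteq> 0}"
  have fI: "finite I" by simp
  have I0: "I \<noteq> {}"
  proof
    assume "I = {}"
    then have "a = 0" by (auto simp: I_def vec_eq_iff)
    with a show False by simp
  qed
  have ind2: "indep_vars (\<lambda>_. borel) (\<lambda>r \<omega>. a $ r * \<eta> \<omega> $ r) I"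
    using indep_vars_compose2[OF ind, where Y="\<lambda>r x. a $ r * x" and N="\<lambda>_. borel"]
    by (auto intro: indep_vars_subset)
  have d: "distributed M lborel (\<lambda>\<omega>. a $ r * \<eta> \<omega> $ r) (normal_density 0 (\<bar>a $ r\<bar> * \<sigma>))"
    if "r \<in> I" for r
  proof -
    have "distributed M lborel (\<lambda>\<omega>. 0 + a $ r * \<eta> \<omega> $ r) (normal_density (0 + a $ r * 0) (\<bar>a $ r\<bar> * \<sigma>))"
      by (rule normal_density_affine) (use g s that I_def in auto)
    then show ?thesis by simp
  qed
  have S: "distributed M lborel (\<lambda>\<omega>. \<Sum>r\<in>I. a $ r * \<eta> \<omega> $ r)
     (normal_density (\<Sum>r\<in>I. 0) (sqrt (\<Sum>r\<in>I. (\<bar>a $ r\<bar> * \<sigma>)\<^sup>2)))"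
    by (rule sum_indep_normal[OF fI I0 ind2]) (use s d I_def in auto)
  have n1: "(\<Sum>r\<in>I. (a $ r)\<^sup>2) = 1"
  proof -
    have "(\<Sum>r\<in>I. (a $ r)\<^sup>2) = (\<Sum>r\<in>UNIV. (a $ r)\<^sup>2)"
      by (rule sum.mono_neutral_left) (auto simp: I_def)
    also have "\<dots> = (norm a)\<^sup>2" by (simp add: norm_vec_def L2_set_def sum_nonneg)
    finally show ?thesis using a by simp
  qed
  have "(\<Sum>r\<in>I. (\<bar>a $ r\<bar> * \<sigma>)\<^sup>2) = \<sigma>\<^sup>2 * (\<Sum>r\<in>I. (a $ r)\<^sup>2)"
    by (simp add: power_mult_distrib sum_distrib_left mult.commute)
  then have sq: "sqrt (\<Sum>r\<in>I. (\<bar>a $ r\<bar> * \<sigma>)\<^sup>2) = \<sigma>" using n1 s by simp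
  have eq: "(\<lambda>\<omega>. a \<bullet> \<eta> \<omega>) = (\<lambda>\<omega>. \<Sum>r\<in>I. a $ r * \<eta> \<omega> $ r)"
  proof
    fix \<omega>
    have "a \<bullet> \<eta> \<omega> = (\<Sum>r\<in>UNIV. a $ r * \<eta> \<omega> $ r)" by (simp add: inner_vec_def)
    also have "\<dots> = (\<Sum>r\<in>I. a $ r * \<eta> \<omega> $ r)"
      by (rule sum.mono_neutral_right) (auto simp: I_def)
    finally show "a \<bullet> \<eta> \<omega> = (\<Sum>r\<in>I. a $ r * \<eta> \<omega> $ r)" .
  qed
  show ?thesis using S unfolding eq sq by simp
qed



lemma col_inner: "column i X \<bullet> column j X = (\<Sum>r\<in>UNIV. X$r$i * X$r$j)"
  by (simp add: inner_vec_def column_def)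

lemma w_eq:
  fixes X :: "real ^ 'p ^ 'n"
  shows "(transpose X *v (X *v b + e)) $ i = (\<Sum>j\<in>UNIV. b$j * (column i X \<bullet> column j X)) + column i X \<bullet> e"
proof -
  have "(transpose X *v (X *v b + e)) $ i = (\<Sum>r\<in>UNIV. X$r$i * ((\<Sum>j\<in>UNIV. X$r$j * b$j) + e$r))"
    by (simp add: matrix_vector_mult_def transpose_def)
  also have "\<dots> = (\<Sum>r\<in>UNIV. \<Sum>j\<in>UNIV. b$j * (X$r$i * X$r$j)) + (\<Sum>r\<in>UNIV. X$r$i * e$r)"
    by (simp add: distrib_left sum.distrib sum_distrib_left mult_ac)
  also have "(\<Sum>r\<in>UNIV. \<Sum>j\<in>UNIV. b$j * (X$r$i * X$r$j)) = (\<Sum>j\<in>UNIV. b$j * (column i X \<bullet> column j X))"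
    by (subst sum.swap) (simp add: col_inner sum_distrib_left)
  also have "(\<Sum>r\<in>UNIV. X$r$i * e$r) = column i X \<bullet> e"
    by (simp add: inner_vec_def column_def)
  finally show ?thesis .
qed

lemma coh_le:
  fixes X :: "real ^ 'p ^ 'n"
  assumes "i \<noteq> j"
  shows "\<bar>column i X \<bullet> column j X\<bar> \<le> coherence X"
proof -
  have fin: "finite {\<bar>column i X \<bullet> column j X\<bar> | i j. i \<noteq> j}"
    by (rule finite_subset[of _ "(\<lambda>(i,j). \<bar>column i X \<bullet> column j X\<bar>) ` UNIV"]) auto
  show ?thesis unfolding coherence_def
    by (rule Max_ge[OF fin]) (use assms in blast)
qed

lemma self_inner: "norm (column i X) = 1 \<Longrightarrow> column i X \<bullet> column i X = (1::real)"
  by (metis power2_norm_eq_inner power_one)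

lemma sum4_swap:
  "(\<Sum>i\<in>A. \<Sum>j\<in>B. \<Sum>r\<in>C. \<Sum>s\<in>D. f i j r s) = (\<Sum>r\<in>C. \<Sum>s\<in>D. \<Sum>i\<in>A. \<Sum>j\<in>B. f i j r s)"
proof -
  have "(\<Sum>i\<in>A. \<Sum>j\<in>B. \<Sum>r\<in>C. \<Sum>s\<in>D. f i j r s) = (\<Sum>i\<in>A. \<Sum>r\<in>C. \<Sum>j\<in>B. \<Sum>s\<in>D. f i j r s)"
    by (rule sum.cong[OF refl], rule sum.swap)
  also have "\<dots> = (\<Sum>i\<in>A. \<Sum>r\<in>C. \<Sum>s\<in>D. \<Sum>j\<in>B. f i j r s)"
    by (rule sum.cong[OF refl], rule sum.cong[OF refl], rule sum.swap)
  also have "\<dots> = (\<Sum>r\<in>C. \<Sum>i\<in>A. \<Sum>s\<in>D. \<Sum>j\<in>B. f i j r s)"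
    by (rule sum.swap)
  also have "\<dots> = (\<Sum>r\<in>C. \<Sum>s\<in>D. \<Sum>i\<in>A. \<Sum>j\<in>B. f i j r s)"
    by (rule sum.cong[OF refl], rule sum.swap)
  finally show ?thesis .
qed

lemma aux_contra: "(Z::real) * 2 \<le> p - 1 \<Longrightarrow> p \<le> n + Z \<Longrightarrow> 2 * n \<le> p \<Longrightarrow> False"
  by linarith

lemma welch:
  fixes X :: "real ^ 'p ^ 'n"
  assumes unit: "\<forall>i. norm (column i X) = 1" and pn: "CARD('p) \<ge> 2 * CARD('n)"
  shows "2 * real CARD('n) * (coherence X)\<^sup>2 \<ge> 1"
proof -
  define G where "G i j = column i X \<bullet> column j X" for i j
  define A where "A r s = (\<Sum>i\<in>UNIV. X$r$i * X$s$i)" for r s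
  define \<mu> where "\<mu> = coherence X"
  define n where "n = real CARD('n)"
  define p where "p = real CARD('p)"
  have a: "(\<Sum>i\<in>UNIV. \<Sum>j\<in>UNIV. (G i j)\<^sup>2) = (\<Sum>r\<in>UNIV. \<Sum>s\<in>UNIV. (A r s)\<^sup>2)"
  proof -
    have "(\<Sum>i\<in>UNIV. \<Sum>j\<in>UNIV. (G i j)\<^sup>2) = (\<Sum>i\<in>UNIV. \<Sum>j\<in>UNIV. \<Sum>r\<in>UNIV. \<Sum>s\<in>UNIV. X$r$i*X$r$j*(X$s$i*X$s$j))"
      by (simp add: G_def col_inner power2_eq_square sum_product)
    also have "\<dots> = (\<Sum>r\<in>UNIV. \<Sum>s\<in>UNIV. \<Sum>i\<in>UNIV. \<Sum>j\<in>UNIV. X$r$i*X$r$j*(X$s$i*X$s$j))"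
      by (rule sum4_swap)
    also have "\<dots> = (\<Sum>r\<in>UNIV. \<Sum>s\<in>UNIV. (A r s)\<^sup>2)"
      by (simp add: A_def power2_eq_square sum_product mult_ac)
    finally show ?thesis .
  qed
  have b: "(\<Sum>r\<in>UNIV. (A r r)\<^sup>2) \<le> (\<Sum>r\<in>UNIV. \<Sum>s\<in>UNIV. (A r s)\<^sup>2)"
    by (intro sum_mono member_le_sum) auto
  have c: "(\<Sum>r\<in>UNIV. A r r)\<^sup>2 \<le> (\<Sum>r\<in>UNIV. (A r r)\<^sup>2) * n"
    using Cauchy_Schwarz_ineq_sum[of "\<lambda>r. A r r" "\<lambda>_. 1" UNIV] by (simp add: n_def)
  have d: "(\<Sum>r\<in>UNIV. A r r) = p"
  proof -
    have "(\<Sum>r\<in>UNIV. A r r) = (\<Sum>i\<in>UNIV. \<Sum>r\<in>UNIV. X$r$i * X$r$i)"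
      unfolding A_def by (rule sum.swap)
    also have "\<dots> = (\<Sum>i\<in>(UNIV::'p set). 1)"
    proof (rule sum.cong[OF refl])
      fix i :: 'p
      show "(\<Sum>r\<in>UNIV. X$r$i * X$r$i) = 1"
        using self_inner[of i X] unit col_inner[of i X i] by simp
    qed
    finally show ?thesis by (simp add: p_def)
  qed
  have p2: "p \<ge> 2"
  proof -
    have "CARD('n) > 0" by (rule finite_UNIV_card_ge_0) simp
    then show ?thesis using pn unfolding p_def by linarith
  qed
  have e: "(\<Sum>i\<in>UNIV. \<Sum>j\<in>UNIV. (G i j)\<^sup>2) \<le> p * (1 + (p - 1) * \<mu>\<^sup>2)"
  proof -
    have "(\<Sum>j\<in>UNIV. (G i j)\<^sup>2) \<le> 1 + (p - 1) * \<mu>\<^sup>2" for i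
    proof -
      have "(\<Sum>j\<in>UNIV. (G i j)\<^sup>2) = (G i i)\<^sup>2 + (\<Sum>j\<in>UNIV - {i}. (G i j)\<^sup>2)"
        by (rule sum.remove) auto
      also have "(G i i)\<^sup>2 = 1" using self_inner[of i X] unit by (simp add: G_def)
      also have "(\<Sum>j\<in>UNIV - {i}. (G i j)\<^sup>2) \<le> (\<Sum>j\<in>UNIV - {i}. \<mu>\<^sup>2)"
      proof (rule sum_mono)
        fix j assume "j \<in> UNIV - {i}"
        then have "\<bar>G i j\<bar> \<le> \<mu>" using coh_le[of i j X] by (auto simp: G_def \<mu>_def)
        then have "\<bar>G i j\<bar>\<^sup>2 \<le> \<mu>\<^sup>2" by (rule power_mono) simp
        then show "(G i j)\<^sup>2 \<le> \<mu>\<^sup>2" by simp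
      qed
      also have "(\<Sum>j\<in>UNIV - {i}. \<mu>\<^sup>2) = (p - 1) * \<mu>\<^sup>2"
        by (simp add: p_def card_Diff_singleton of_nat_diff)
      finally show ?thesis by simp
    qed
    then have "(\<Sum>i\<in>UNIV. \<Sum>j\<in>UNIV. (G i j)\<^sup>2) \<le> (\<Sum>i\<in>(UNIV::'p set). 1 + (p - 1) * \<mu>\<^sup>2)"
      by (intro sum_mono)
    then show ?thesis by (simp add: p_def)
  qed
  have key: "p * p \<le> n * (p * (1 + (p - 1) * \<mu>\<^sup>2))"
  proof -
    have "p * p = p\<^sup>2" by (simp add: power2_eq_square)
    also have "\<dots> \<le> (\<Sum>r\<in>UNIV. (A r r)\<^sup>2) * n" using c d by simp
    also have "\<dots> \<le> (p * (1 + (p - 1) * \<mu>\<^sup>2)) * n"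
      using a b e by (intro mult_right_mono) (auto simp: n_def)
    finally show ?thesis by (simp add: mult_ac)
  qed
  then have key2: "p \<le> n * (1 + (p - 1) * \<mu>\<^sup>2)"
  proof -
    have "p * p \<le> p * (n * (1 + (p - 1) * \<mu>\<^sup>2))" using key by (simp only: mult.left_commute)
    moreover have "p > 0" using p2 by simp
    ultimately show ?thesis by (simp only: mult_le_cancel_left_pos)
  qed
  have pn': "p \<ge> 2 * n" using pn unfolding p_def n_def by simp
  show ?thesis
  proof (rule ccontr)
    assume "\<not> 1 \<le> 2 * real CARD('n) * (coherence X)\<^sup>2"
    then have h: "2 * n * \<mu>\<^sup>2 < 1" by (simp add: n_def \<mu>_def)
    have "n * ((p - 1) * \<mu>\<^sup>2) = (p - 1) * (n * \<mu>\<^sup>2)" by (simp add: mult_ac)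
    also have "\<dots> \<le> (p - 1) * (1/2)" using h p2 by (intro mult_left_mono) auto
    finally have Z2: "n * ((p - 1) * \<mu>\<^sup>2) * 2 \<le> p - 1" by simp
    have Z3: "p \<le> n + n * ((p - 1) * \<mu>\<^sup>2)" using key2 by (simp add: distrib_left)
    show False by (rule aux_contra[OF Z2 Z3 pn'])
  qed
qed




lemma bmin_le:
  assumes "i \<in> supp_vec \<beta>"
  shows "beta_min \<beta> \<le> \<bar>\<beta> $ i\<bar>"
proof -
  have fin: "finite {\<bar>\<beta> $ i\<bar> | i. i \<in> supp_vec \<beta>}"
    by (rule finite_subset[of _ "(\<lambda>i. \<bar>\<beta> $ i\<bar>) ` UNIV"]) auto
  show ?thesis unfolding beta_min_def by (rule Min_le[OF fin]) (use assms in blast)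
qed

lemma bmin_nonneg:
  assumes "supp_vec \<beta> \<noteq> {}"
  shows "beta_min \<beta> \<ge> 0"
proof -
  have fin: "finite {\<bar>\<beta> $ i\<bar> | i. i \<in> supp_vec \<beta>}"
    by (rule finite_subset[of _ "(\<lambda>i. \<bar>\<beta> $ i\<bar>) ` UNIV"]) auto
  have ne: "{\<bar>\<beta> $ i\<bar> | i. i \<in> supp_vec \<beta>} \<noteq> {}" using assms by blast
  have "beta_min \<beta> \<in> {\<bar>\<beta> $ i\<bar> | i. i \<in> supp_vec \<beta>}"
    unfolding beta_min_def by (rule Min_in[OF fin ne])
  then show ?thesis by auto
qed

lemma norm_sq_supp: "(norm \<beta>)\<^sup>2 = (\<Sum>l\<in>supp_vec \<beta>. (\<beta> $ l)\<^sup>2)"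
proof -
  have "(norm \<beta>)\<^sup>2 = (\<Sum>l\<in>UNIV. (\<beta> $ l)\<^sup>2)"
    by (simp add: norm_vec_def L2_set_def sum_nonneg)
  also have "\<dots> = (\<Sum>l\<in>supp_vec \<beta>. (\<beta> $ l)\<^sup>2)"
    by (rule sum.mono_neutral_right) (auto simp: supp_vec_def)
  finally show ?thesis .
qed

lemma l1_bound:
  fixes \<beta> :: "real ^ 'p"
  shows "(\<Sum>l\<in>UNIV. \<bar>\<beta> $ l\<bar>) \<le> sqrt (real (card (supp_vec \<beta>))) * norm \<beta>"
proof -
  have e: "(\<Sum>l\<in>UNIV. \<bar>\<beta> $ l\<bar>) = (\<Sum>l\<in>supp_vec \<beta>. \<bar>\<beta> $ l\<bar> * 1)"
    by simp (rule sum.mono_neutral_right, auto simp: supp_vec_def)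
  have "(\<Sum>l\<in>supp_vec \<beta>. \<bar>\<beta> $ l\<bar> * 1)\<^sup>2 \<le> (\<Sum>l\<in>supp_vec \<beta>. \<bar>\<beta> $ l\<bar>\<^sup>2) * (\<Sum>l\<in>supp_vec \<beta>. 1\<^sup>2)"
    by (rule Cauchy_Schwarz_ineq_sum)
  also have "\<dots> = (norm \<beta>)\<^sup>2 * real (card (supp_vec \<beta>))"
    by (simp add: norm_sq_supp)
  finally have "(\<Sum>l\<in>UNIV. \<bar>\<beta> $ l\<bar>)\<^sup>2 \<le> (sqrt (real (card (supp_vec \<beta>))) * norm \<beta>)\<^sup>2"
    unfolding e by (simp add: power_mult_distrib mult.commute)
  then show ?thesis
    by (rule power2_le_imp_le) simp
qed

lemma bmin_sq:
  fixes \<beta> :: "real ^ 'p"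
  assumes "supp_vec \<beta> \<noteq> {}"
  shows "(beta_min \<beta>)\<^sup>2 * real (card (supp_vec \<beta>)) \<le> (norm \<beta>)\<^sup>2"
proof -
  have "(beta_min \<beta>)\<^sup>2 * real (card (supp_vec \<beta>)) = (\<Sum>l\<in>supp_vec \<beta>. (beta_min \<beta>)\<^sup>2)"
    by simp
  also have "\<dots> \<le> (\<Sum>l\<in>supp_vec \<beta>. (\<beta> $ l)\<^sup>2)"
  proof (rule sum_mono)
    fix l assume "l \<in> supp_vec \<beta>"
    then have "beta_min \<beta> \<le> \<bar>\<beta> $ l\<bar>" by (rule bmin_le)
    then have "(beta_min \<beta>)\<^sup>2 \<le> \<bar>\<beta> $ l\<bar>\<^sup>2" using bmin_nonneg[OF assms] by (intro power_mono) auto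
    then show "(beta_min \<beta>)\<^sup>2 \<le> (\<beta> $ l)\<^sup>2" by simp
  qed
  finally show ?thesis by (simp add: norm_sq_supp)
qed

lemma approx_w:
  fixes X :: "real ^ 'p ^ 'n"
  assumes unit: "\<forall>i. norm (column i X) = 1" and mu: "coherence X \<ge> 0"
  shows "\<bar>(\<Sum>l\<in>UNIV. \<beta>$l * (column i X \<bullet> column l X)) - \<beta> $ i\<bar> \<le> coherence X * (\<Sum>l\<in>UNIV. \<bar>\<beta> $ l\<bar>)"
proof -
  have "(\<Sum>l\<in>UNIV. \<beta>$l * (column i X \<bullet> column l X)) = \<beta>$i * (column i X \<bullet> column i X) + (\<Sum>l\<in>UNIV - {i}. \<beta>$l * (column i X \<bullet> column l X))"
    by (rule sum.remove) auto
  also have "column i X \<bullet> column i X = 1" using unit self_inner by blast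
  finally have eq: "(\<Sum>l\<in>UNIV. \<beta>$l * (column i X \<bullet> column l X)) - \<beta> $ i = (\<Sum>l\<in>UNIV - {i}. \<beta>$l * (column i X \<bullet> column l X))"
    by simp
  have "\<bar>\<Sum>l\<in>UNIV - {i}. \<beta>$l * (column i X \<bullet> column l X)\<bar> \<le> (\<Sum>l\<in>UNIV - {i}. \<bar>\<beta>$l * (column i X \<bullet> column l X)\<bar>)"
    by (rule sum_abs)
  also have "\<dots> \<le> (\<Sum>l\<in>UNIV - {i}. coherence X * \<bar>\<beta>$l\<bar>)"
  proof (rule sum_mono)
    fix l assume "l \<in> UNIV - {i}"
    then have "\<bar>column i X \<bullet> column l X\<bar> \<le> coherence X" using coh_le[of i l X] by auto
    then have "\<bar>\<beta>$l\<bar> * \<bar>column i X \<bullet> column l X\<bar> \<le> \<bar>\<beta>$l\<bar> * coherence X"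
      by (rule mult_left_mono) simp
    then show "\<bar>\<beta>$l * (column i X \<bullet> column l X)\<bar> \<le> coherence X * \<bar>\<beta>$l\<bar>"
      by (simp add: abs_mult mult.commute)
  qed
  also have "\<dots> \<le> (\<Sum>l\<in>UNIV. coherence X * \<bar>\<beta>$l\<bar>)"
    by (rule sum_mono2) (use mu in auto)
  finally show ?thesis unfolding eq by (simp add: sum_distrib_left)
qed

lemma separation:
  fixes X :: "real ^ 'p ^ 'n" and e :: "real ^ 'n"
  assumes unit: "\<forall>i. norm (column i X) = 1" and mu: "coherence X \<ge> 0"
    and noise: "\<forall>i. \<bar>column i X \<bullet> e\<bar> \<le> t"
    and cond: "beta_min \<beta> > 2 * coherence X * (\<Sum>l\<in>UNIV. \<bar>\<beta> $ l\<bar>) + 2 * t"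
    and i: "i \<in> supp_vec \<beta>" and j: "j \<notin> supp_vec \<beta>"
  shows "\<bar>(transpose X *v (X *v \<beta> + e)) $ j\<bar> < \<bar>(transpose X *v (X *v \<beta> + e)) $ i\<bar>"
proof -
  let ?L = "coherence X * (\<Sum>l\<in>UNIV. \<bar>\<beta> $ l\<bar>)"
  have ai: "\<bar>(\<Sum>l\<in>UNIV. \<beta>$l * (column i X \<bullet> column l X)) - \<beta> $ i\<bar> \<le> ?L"
    by (rule approx_w[OF unit mu])
  have aj: "\<bar>(\<Sum>l\<in>UNIV. \<beta>$l * (column j X \<bullet> column l X)) - \<beta> $ j\<bar> \<le> ?L"
    by (rule approx_w[OF unit mu])
  have bj: "\<beta> $ j = 0" using j by (simp add: supp_vec_def)
  have bi: "beta_min \<beta> \<le> \<bar>\<beta> $ i\<bar>" by (rule bmin_le[OF i])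
  have ni: "\<bar>column i X \<bullet> e\<bar> \<le> t" and nj: "\<bar>column j X \<bullet> e\<bar> \<le> t" using noise by auto
  show ?thesis unfolding w_eq using ai aj bj bi ni nj cond by linarith
qed

lemma combin:
  fixes w :: "real ^ 'p"
  assumes sep: "\<forall>i\<in>T. \<forall>j. j \<notin> T \<longrightarrow> \<bar>w $ j\<bar> < \<bar>w $ i\<bar>"
    and cT: "card T \<le> card S"
    and S: "\<forall>i\<in>S. \<forall>j. j \<notin> S \<longrightarrow> \<bar>w $ j\<bar> \<le> \<bar>w $ i\<bar>"
  shows "T \<subseteq> S"
proof (rule ccontr)
  assume "\<not> T \<subseteq> S"
  then obtain i where iT: "i \<in> T" and iS: "i \<notin> S" by blast
  have "S \<subseteq> T - {i}"
  proof
    fix j assume jS: "j \<in> S"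
    have "\<bar>w $ i\<bar> \<le> \<bar>w $ j\<bar>" using S jS iS by blast
    then have "j \<in> T" using sep iT by force
    then show "j \<in> T - {i}" using jS iS by auto
  qed
  then have "card S \<le> card (T - {i})" by (intro card_mono) auto
  also have "\<dots> < card T" using iT by (intro card_Diff1_less) auto
  finally show False using cT by simp
qed




lemma final_ineq:
  fixes c1 c2 \<mu> L1 s B bm :: real
  assumes "c1 > 2" "c2 > 2" "\<mu> \<ge> 0" "L1 \<le> s" "B \<ge> 0" "s \<ge> 0"
    and "bm > 2 * c1 * \<mu> * s + 4 * c2 * B"
  shows "bm > 2 * \<mu> * L1 + 2 * (2 * B)"
proof -
  have 1: "\<mu> * L1 \<le> \<mu> * s" using assms by (intro mult_left_mono) auto
  have 2: "1 * (\<mu> * s) \<le> c1 * (\<mu> * s)" using assms by (intro mult_right_mono) auto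
  have 3: "1 * B \<le> c2 * B" using assms by (intro mult_right_mono) auto
  show ?thesis using assms 1 2 3 by (simp add: mult.assoc mult.left_commute)
qed

lemma k_small:
  fixes x c1 \<mu> k n :: real
  assumes x0: "x \<ge> 0" and xk: "x\<^sup>2 * k \<le> 1" and k1: "k \<ge> 1" and c1: "c1 > 2" and mu: "\<mu> > 0"
    and xgt: "x > 2 * c1 * \<mu> * sqrt k" and w: "2 * n * \<mu>\<^sup>2 \<ge> 1"
  shows "k\<^sup>2 < n"
proof -
  have pos: "0 \<le> 2 * c1 * \<mu> * sqrt k" using c1 mu k1 by simp
  have "(2 * c1 * \<mu> * sqrt k)\<^sup>2 < x\<^sup>2" using xgt pos by (intro power_strict_mono) auto
  then have "4 * c1\<^sup>2 * \<mu>\<^sup>2 * k < x\<^sup>2" using k1 by (simp add: power_mult_distrib)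
  then have "4 * c1\<^sup>2 * \<mu>\<^sup>2 * k * k \<le> x\<^sup>2 * k" using k1 by (intro mult_right_mono) auto
  then have a: "4 * c1\<^sup>2 * \<mu>\<^sup>2 * k\<^sup>2 \<le> 1" using xk by (simp add: power2_eq_square mult.assoc)
  have "2 * 2 \<le> c1 * c1" using c1 by (intro mult_mono) auto
  then have "16 \<le> 4 * c1\<^sup>2" by (simp add: power2_eq_square)
  then have b0: "16 * (\<mu>\<^sup>2 * k\<^sup>2) \<le> 4 * c1\<^sup>2 * (\<mu>\<^sup>2 * k\<^sup>2)" by (intro mult_right_mono) auto
  have a': "4 * c1\<^sup>2 * (\<mu>\<^sup>2 * k\<^sup>2) \<le> 1" using a by (simp only: mult.assoc)
  have b: "16 * (\<mu>\<^sup>2 * k\<^sup>2) \<le> 1" using a' b0 by linarith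
  have "16 * (\<mu>\<^sup>2 * k\<^sup>2) \<le> 2 * n * \<mu>\<^sup>2" using b w by linarith
  then have "\<mu>\<^sup>2 * (16 * k\<^sup>2) \<le> \<mu>\<^sup>2 * (2 * n)" by (simp add: mult_ac)
  then have "16 * k\<^sup>2 \<le> 2 * n" using mu by simp
  moreover have "k\<^sup>2 > 0" using k1 by simp
  ultimately show ?thesis by linarith
qed

theorem corollary2:
  fixes M :: "'a measure"
    and X :: "real ^ 'p ^ 'n"
    and \<beta> :: "real ^ 'p"
    and \<eta> :: "'a \<Rightarrow> real ^ 'n"
    and k :: nat and \<sigma> c1 c2 :: real
  assumes "prob_space M"
    and unit_cols: "\<forall>i. norm (column i X) = 1"
    and mu_pos: "coherence X > 0"
    and k_supp: "card (supp_vec \<beta>) = k"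
    and k_lt_n: "k < CARD('n)"
    and sigma_pos: "\<sigma> > 0"
    and noise_indep: "prob_space.indep_vars M (\<lambda>_. borel) (\<lambda>r \<omega>. \<eta> \<omega> $ r) UNIV"
    and noise_gauss: "\<forall>r. distributed M lborel (\<lambda>\<omega>. \<eta> \<omega> $ r) (normal_density 0 \<sigma>)"
    and p_ge: "CARD('p) \<ge> 2 * CARD('n)"
    and k_lt_mu: "real k < 1 / coherence X"
    and c1: "c1 > 2" and c2: "c2 > 2"
    and beta_cond: "beta_min \<beta> / norm \<beta> >
        2 * c1 * coherence X * sqrt (real k)
        + 4 * c2 * sqrt (\<sigma>\<^sup>2 * ln (real CARD('p))) / norm \<beta>"
  shows "measure M {\<omega> \<in> space M.
            \<forall>d::nat. \<forall>S :: 'p set.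
              nat \<lceil>sqrt (real CARD('n))\<rceil> \<le> d \<and> d \<le> CARD('p) \<and>
              alg1_output X (X *v \<beta> + \<eta> \<omega>) d S \<longrightarrow> supp_vec \<beta> \<subseteq> S}
         > 1 - 2 / (real CARD('p) * sqrt (2 * pi * ln (real CARD('p))))"
proof -
  interpret prob_space M by fact
  define p where "p = real CARD('p)"
  define n where "n = real CARD('n)"
  define \<mu> where "\<mu> = coherence X"
  define L where "L = ln p"
  define t where "t = 2 * \<sigma> * sqrt L"
  define T where "T = {\<omega> \<in> space M.
            \<forall>d::nat. \<forall>S :: 'p set.
              nat \<lceil>sqrt (real CARD('n))\<rceil> \<le> d \<and> d \<le> CARD('p) \<and>
              alg1_output X (X *v \<beta> + \<eta> \<omega>) d S \<longrightarrow> supp_vec \<beta> \<subseteq> S}"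
  have n1: "n \<ge> 1"
  proof -
    have "CARD('n) > 0" by (rule finite_UNIV_card_ge_0) simp
    then show ?thesis unfolding n_def by linarith
  qed
  have p2: "p \<ge> 2" using p_ge n1 unfolding p_def n_def by linarith
  have L0: "L > 0" unfolding L_def using p2 by simp
  have t0: "t > 0" unfolding t_def using L0 sigma_pos by simp
  define W where "W i \<omega> = (\<Sum>j\<in>UNIV. \<beta>$j * (column i X \<bullet> column j X)) + column i X \<bullet> \<eta> \<omega>" for i \<omega>
  have Yd: "distributed M lborel (\<lambda>\<omega>. column i X \<bullet> \<eta> \<omega>) (normal_density 0 \<sigma>)" for i
    by (rule proj_normal[OF noise_indep noise_gauss sigma_pos]) (use unit_cols in auto)
  have Ym[measurable]: "(\<lambda>\<omega>. column i X \<bullet> \<eta> \<omega>) \<in> borel_measurable M" for i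
    using distributed_measurable[OF Yd[of i]] by simp
  have Wm[measurable]: "W i \<in> borel_measurable M" for i
    unfolding W_def by measurable
  define F where "F i = {\<omega> \<in> space M. \<bar>column i X \<bullet> \<eta> \<omega>\<bar> > t}" for i
  have Fs: "F i \<in> sets M" for i unfolding F_def by measurable
  have q: "2 * (\<sigma>\<^sup>2 * normal_density 0 \<sigma> t / t) = 1 / (p * p * sqrt (2 * pi * L))"
  proof -
    have e1: "exp (- (t - 0)\<^sup>2 / (2 * \<sigma>\<^sup>2)) = exp (- 2 * L)"
      unfolding t_def using sigma_pos L0 by (simp add: power_mult_distrib)
    have e2: "exp (- 2 * L) * (p * p) = 1"
    proof -
      have "exp (- 2 * L) * (p * p) = exp (- 2 * L) * exp L * exp L"
        unfolding L_def using p2 by simp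
      also have "\<dots> = exp (- 2 * L + L + L)" by (simp only: exp_add)
      also have "- 2 * L + L + L = 0" by simp
      finally show ?thesis by simp
    qed
    have s1: "sqrt (2 * pi * \<sigma>\<^sup>2) = sqrt (2 * pi) * \<sigma>" using sigma_pos by (simp add: real_sqrt_mult)
    have s2: "sqrt (2 * pi * L) = sqrt (2 * pi) * sqrt L" by (simp add: real_sqrt_mult)
    have "exp (- 2 * L) = 1 / (p * p)" using e2 p2 by (simp add: field_simps)
    then show ?thesis
      unfolding normal_density_def e1 s1 s2 using sigma_pos L0 p2
      by (simp add: t_def field_simps power2_eq_square)
  qed
  have Fb: "measure M (F i) \<le> 1 / (p * p * sqrt (2 * pi * L))" for i
    using prob_abs_gt[OF Yd sigma_pos t0] unfolding F_def q .
  have U: "measure M (\<Union>i. F i) \<le> 1 / (p * sqrt (2 * pi * L))"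
  proof -
    have "measure M (\<Union>i\<in>UNIV. F i) \<le> (\<Sum>i\<in>UNIV. measure M (F i))"
      by (rule measure_UNION_le) (auto simp: Fs)
    also have "\<dots> \<le> (\<Sum>i\<in>(UNIV::'p set). 1 / (p * p * sqrt (2 * pi * L)))"
      by (rule sum_mono) (rule Fb)
    also have "\<dots> = 1 / (p * sqrt (2 * pi * L))" using p2 by (simp add: p_def)
    finally show ?thesis by simp
  qed
  have Us: "(\<Union>i. F i) \<in> sets M" using Fs by auto
  have alg_eq: "alg1_output X (X *v \<beta> + \<eta> \<omega>) d S \<longleftrightarrow>
      card S = d \<and> (\<forall>i\<in>S. \<forall>j. j \<notin> S \<longrightarrow> \<bar>W j \<omega>\<bar> \<le> \<bar>W i \<omega>\<bar>)" for \<omega> d S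
    unfolding alg1_output_def Let_def W_def w_eq by simp
  have Ts: "T \<in> sets M"
  proof -
    have "T = {\<omega> \<in> space M. \<forall>d::nat. \<forall>S :: 'p set.
              nat \<lceil>sqrt (real CARD('n))\<rceil> \<le> d \<and> d \<le> CARD('p) \<and>
              (card S = d \<and> (\<forall>i\<in>S. \<forall>j. j \<notin> S \<longrightarrow> \<bar>W j \<omega>\<bar> \<le> \<bar>W i \<omega>\<bar>)) \<longrightarrow> supp_vec \<beta> \<subseteq> S}"
      unfolding T_def alg_eq ..
    also have "\<dots> \<in> sets M" by measurable
    finally show ?thesis .
  qed
  have kd: "k \<le> nat \<lceil>sqrt (real CARD('n))\<rceil>"
  proof (cases "k = 0")
    case False
    then have ne: "supp_vec \<beta> \<noteq> {}" using k_supp by auto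
    then have nb: "norm \<beta> > 0" by (auto simp: supp_vec_def)
    define x where "x = beta_min \<beta> / norm \<beta>"
    have x0: "x \<ge> 0" unfolding x_def using bmin_nonneg[OF ne] nb by simp
    have xk: "x\<^sup>2 * real k \<le> 1"
      using bmin_sq[OF ne] nb unfolding x_def k_supp by (simp add: power_divide field_simps)
    have tpos: "4 * c2 * sqrt (\<sigma>\<^sup>2 * ln (real CARD('p))) / norm \<beta> \<ge> 0"
      using c2 nb by simp
    have xgt: "x > 2 * c1 * \<mu> * sqrt (real k)" using beta_cond tpos unfolding x_def \<mu>_def by linarith
    have "real k ^ 2 < n"
      by (rule k_small[OF x0 xk _ c1 _ xgt]) (use False mu_pos welch[OF unit_cols p_ge] in \<open>auto simp: \<mu>_def n_def\<close>)
    then have "real k < sqrt n" using real_less_rsqrt by blast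
    then have "real k \<le> real_of_int \<lceil>sqrt n\<rceil>" using le_of_int_ceiling[of "sqrt n"] by linarith
    then have "int k \<le> \<lceil>sqrt n\<rceil>" by linarith
    then show ?thesis unfolding n_def by linarith
  qed simp
  have sub: "space M - (\<Union>i. F i) \<subseteq> T"
  proof
    fix \<omega> assume \<omega>: "\<omega> \<in> space M - (\<Union>i. F i)"
    have noise: "\<forall>i. \<bar>column i X \<bullet> \<eta> \<omega>\<bar> \<le> t" using \<omega> by (auto simp: F_def not_less)
    show "\<omega> \<in> T" unfolding T_def
    proof (intro CollectI conjI allI impI)
      show "\<omega> \<in> space M" using \<omega> by simp
      fix d :: nat and S :: "'p set"
      assume H: "nat \<lceil>sqrt (real CARD('n))\<rceil> \<le> d \<and> d \<le> CARD('p) \<and> alg1_output X (X *v \<beta> + \<eta> \<omega>) d S"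
      show "supp_vec \<beta> \<subseteq> S"
      proof (cases "k = 0")
        case True then show ?thesis using k_supp by simp
      next
        case False
        then have ne: "supp_vec \<beta> \<noteq> {}" using k_supp by auto
        then have nb: "norm \<beta> > 0" by (auto simp: supp_vec_def)
        have sq: "sqrt (\<sigma>\<^sup>2 * ln (real CARD('p))) = \<sigma> * sqrt L"
          using sigma_pos by (simp add: real_sqrt_mult L_def p_def)
        have bc: "beta_min \<beta> > 2 * c1 * \<mu> * (sqrt (real k) * norm \<beta>) + 4 * c2 * (\<sigma> * sqrt L)"
        proof -
          have "beta_min \<beta> / norm \<beta> > (2 * c1 * \<mu> * (sqrt (real k) * norm \<beta>) + 4 * c2 * (\<sigma> * sqrt L)) / norm \<beta>"
            using beta_cond nb unfolding sq \<mu>_def by (simp add: add_divide_distrib)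
          then show ?thesis using nb by (simp add: divide_strict_right_mono_neg divide_less_cancel)
        qed
        have cond: "beta_min \<beta> > 2 * coherence X * (\<Sum>l\<in>UNIV. \<bar>\<beta> $ l\<bar>) + 2 * t"
          unfolding t_def using final_ineq[OF c1 c2 _ l1_bound[of \<beta>, unfolded k_supp] _ _ bc] mu_pos sigma_pos L0
          by (simp add: \<mu>_def mult.assoc)
        have sep: "\<forall>i\<in>supp_vec \<beta>. \<forall>j. j \<notin> supp_vec \<beta> \<longrightarrow>
            \<bar>(transpose X *v (X *v \<beta> + \<eta> \<omega>)) $ j\<bar> < \<bar>(transpose X *v (X *v \<beta> + \<eta> \<omega>)) $ i\<bar>"
          using separation[OF unit_cols _ noise cond] mu_pos by auto
        have Sd: "card S = d" and Sc: "\<forall>i\<in>S. \<forall>j. j \<notin> S \<longrightarrow>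
            \<bar>(transpose X *v (X *v \<beta> + \<eta> \<omega>)) $ j\<bar> \<le> \<bar>(transpose X *v (X *v \<beta> + \<eta> \<omega>)) $ i\<bar>"
          using H unfolding alg1_output_def Let_def by auto
        have "card (supp_vec \<beta>) \<le> card S" using kd H Sd k_supp by linarith
        then show ?thesis by (rule combin[OF sep _ Sc])
      qed
    qed
  qed
  have "measure M T \<ge> measure M (space M - (\<Union>i. F i))"
    by (rule finite_measure_mono[OF sub Ts])
  also have "measure M (space M - (\<Union>i. F i)) = 1 - measure M (\<Union>i. F i)"
    by (rule prob_compl[OF Us])
  finally have m: "measure M T \<ge> 1 - 1 / (p * sqrt (2 * pi * L))" using U by linarith
  have pos: "1 / (p * sqrt (2 * pi * L)) > 0" using p2 L0 by simp
  have "1 - 2 / (p * sqrt (2 * pi * L)) < 1 - 1 / (p * sqrt (2 * pi * L))"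
    using pos by (simp add: divide_strict_right_mono)
  then show ?thesis using m unfolding T_def p_def L_def by linarith
qed


end
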